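(* Let $h$ be an admissible perturbation. There exist constants $\overline C_e<C_e$, $e\in\mathcal E$, depending only on $h$ and the network (not on $\eta$), such that for every $\eta>0$ there is $t_0\ge0$ with the following property: for every admissible initial condition, the solution of the dynamics with rate $\eta$ satisfies $f^\pi_e(t)=(A\pi(t))_e\le\overline C_e$ for all $t\ge t_0$ and all $e\in\mathcal E$.
   Context: Network: $\mathcal G=(\mathcal V,\mathcal E)$ is a finite directed graph with $\mathcal V=\{0,1,\dots,n\}$, containing no directed cycle, in which node $0$ is the unique node with no incoming link, node $n$ is the unique node with no outgoing link, there is a directed path from every node to $n$, and every link $(u,v)\in\mathcal E$ satisfies $u<v$. For $v\in\mathcal V$, $\mathcal E_v^-$ and $\mathcal E_v^+$ are the sets of links entering and leaving $v$. Each link $e$ has a flow-density function $\mu_e:[0,\infty)\to[0,\infty)$ that is continuously differentiable, strictly increasing, strictly concave, with $\mu_e(0)=0$ and $\mu_e'(0)<\infty$; its capacity is $C_e:=\lim_{\rho\to\infty}\mu_e(\rho)\in(0,+\infty]$. Put $\mathcal F_v:=\prod_{e\in\mathcal E_v^+}[0,C_e)$, $\mathcal F:=\prod_{e\in\mathcal E}[0,C_e)$, and $\mu(\rho):=(\mu_e(\rho_e))_{e\in\mathcal E}$. The delay is $T_e(f_e)=\mu_e^{-1}(f_e)/f_e$ for $0<f_e<C_e$, $T_e(0)=1/\mu_e'(0)$, $T_e(f_e)=+\infty$ for $f_e\ge C_e$; $T(f):=(T_e(f_e))_e$. $\mathcal P$ is the set of directed paths from $0$ to $n$, $A\in\{0,1\}^{\mathcal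 E\times\mathcal P}$ the link-path incidence matrix ($A_{ep}=1$ iff $e\in p$), $\mathcal S(\mathcal P)=\{\pi\in\mathbb R_+^{\mathcal P}:\sum_p\pi_p=1\}$, $\Pi:=\{\pi\in\mathcal S(\mathcal P):(A\pi)_e<C_e\ \forall e\}$, and $f^\pi:=A\pi$. The min-cut capacity $C^*:=\min\{\sum_{(u,v)\in\mathcal E:u\in\mathcal U,v\notin\mathcal U}C_{(u,v)}:\mathcal U\subseteq\mathcal V,0\in\mathcal U,n\notin\mathcal U\}$ is assumed to satisfy $C^*>1$. Perturbation: $\Phi:=I-|\mathcal P|^{-1}\mathbf 1\mathbf 1'$; interiors $\mathrm{int}$ and boundaries $\partial$ of subsets of $\mathcal S(\mathcal P)$ are relative to the hyperplane $\{x:\mathbf 1'x=1\}$. An admissible perturbation is a function $h:\Pi_h\to\mathbb R$, where $\Pi_h\subseteq\Pi$ is closed in $\mathbb R^{\mathcal P}$, convex, with nonempty interior, $h$ is strictly convex, twice differentiable on $\mathrm{int}(\Pi_h)$, and $\|\tilde\nabla h(\pi)\|\to+\infty$ as $\pi\to\partial\Pi_h$, where $\tilde\nabla h:=\Phi\nabla h$. Its perturbed best response is $F^h(f):=\arg\min_{\omega\in\Pi_h}\{\omega'A'T(f)+h(\omega)\}$ for $f\in\mathcal F$. Local decisions: for each $v\in\{0,\dots,n-1\}$ a continuously differentiable $G^v:\mathcal F_v\times\Pi\to\mathcal S(\mathcal E_v^+)$ is given such that (consistency) $(\sum_{j\in\mathcal E_v^+}f^\pi_j)\,G^v_e(f^\pi_{\mathcal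 E_v^+},\pi)=f^\pi_e$ for all $\pi\in\Pi$, $e\in\mathcal E_v^+$; and (cooperativity) $\partial G^v_j(f_{\mathcal E_v^+},\pi)/\partial f_e\ge0$ for all $\pi\in\Pi$, $f_{\mathcal E_v^+}\in\mathcal F_v$, $j\neq e\in\mathcal E_v^+$. For $f\in\mathcal F$, $\pi\in\Pi$, $e\in\mathcal E_v^+$: $H_e(f,\pi):=G^v_e(f_{\mathcal E_v^+},\pi)-f_e$ if $v=0$, and $H_e(f,\pi):=(\sum_{j\in\mathcal E_v^-}f_j)G^v_e(f_{\mathcal E_v^+},\pi)-f_e$ if $1\le v<n$. Dynamics: for $\eta>0$, $\dot\pi=\eta(F^h(f)-\pi)$, $\dot\rho=H(f,\pi)$, $f=\mu(\rho)$. An admissible initial condition is $\pi(0)\in\Pi$ with all entries positive and $\rho(0)\in(0,\infty)^{\mathcal E}$; $(\pi(t),\rho(t))_{t\ge0}$ denotes the (unique, global) solution, $f(t):=\mu(\rho(t))$, $f^\pi(t):=A\pi(t)$. *)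

theory Defs
  imports "HOL-Analysis.Analysis" "HOL-Library.Extended_Real"
begin

text \<open>Nodes are 0..n (naturals); links are elements of a finite type 'e,
  the link e goes from node src e to node dst e.  Paths from 0 to n are elements of a
  finite type 'p, enumerated by the bijection pth onto the set of directed paths
  (as lists of links).\<close>

definition is_path :: "('e \<Rightarrow> nat) \<Rightarrow> ('e \<Rightarrow> nat) \<Rightarrow> nat \<Rightarrow> 'e list \<Rightarrow> bool" where
  "is_path src dst n es \<longleftrightarrow> es \<noteq> [] \<and> src (es ! 0) = 0 \<and> dst (last es) = n \<and>
     (\<forall>i. Suc i < length es \<longrightarrow> dst (es ! i) = src (es ! Suc i))"

definition reach :: "('e \<Rightarrow> nat) \<Rightarrow> ('e \<Rightarrow> nat) \<Rightarrow> nat \<Rightarrow> nat \<Rightarrow> bool" where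
  "reach src dst u w \<longleftrightarrow> (\<exists>es. es \<noteq> [] \<and> src (es ! 0) = u \<and> dst (last es) = w \<and>
     (\<forall>i. Suc i < length es \<longrightarrow> dst (es ! i) = src (es ! Suc i)))"

definition network :: "nat \<Rightarrow> ('e::finite \<Rightarrow> nat) \<Rightarrow> ('e \<Rightarrow> nat) \<Rightarrow> ('p::finite \<Rightarrow> 'e list) \<Rightarrow> bool" where
  "network n src dst pth \<longleftrightarrow>
     1 \<le> n \<and>
     inj (\<lambda>e. (src e, dst e)) \<and>
     (\<forall>e. src e < dst e \<and> dst e \<le> n) \<and>
     (\<forall>v. 1 \<le> v \<and> v \<le> n \<longrightarrow> (\<exists>e. dst e = v)) \<and>
     (\<forall>v. v < n \<longrightarrow> (\<exists>e. src e = v)) \<and>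
     (\<forall>v. v < n \<longrightarrow> reach src dst v n) \<and>
     bij_betw pth UNIV {es. is_path src dst n es}"

definition strict_concave_on :: "real set \<Rightarrow> (real \<Rightarrow> real) \<Rightarrow> bool" where
  "strict_concave_on S g \<longleftrightarrow> (\<forall>x\<in>S. \<forall>y\<in>S. x \<noteq> y \<longrightarrow> (\<forall>t. 0 < t \<and> t < 1 \<longrightarrow>
      g ((1 - t) * x + t * y) > (1 - t) * g x + t * g y))"

definition flow_density :: "('e \<Rightarrow> real \<Rightarrow> real) \<Rightarrow> bool" where
  "flow_density mu \<longleftrightarrow> (\<forall>e.
     (\<exists>d. (\<forall>x\<ge>0. (mu e has_real_derivative d x) (at x within {0..})) \<and> continuous_on {0..} d) \<and>
     strict_mono_on {0..} (mu e) \<and>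
     strict_concave_on {0..} (mu e) \<and>
     mu e 0 = 0)"

text \<open>Capacity: limit at infinity of the increasing function mu e (= its supremum).\<close>
definition cap :: "('e \<Rightarrow> real \<Rightarrow> real) \<Rightarrow> 'e \<Rightarrow> ereal" where
  "cap mu e = (SUP r\<in>{0::real..}. ereal (mu e r))"

definition deriv0 :: "('e \<Rightarrow> real \<Rightarrow> real) \<Rightarrow> 'e \<Rightarrow> real" where
  "deriv0 mu e = (THE d. (mu e has_real_derivative d) (at 0 within {0..}))"

definition mu_inv :: "('e \<Rightarrow> real \<Rightarrow> real) \<Rightarrow> 'e \<Rightarrow> real \<Rightarrow> real" where
  "mu_inv mu e y = (THE r. 0 \<le> r \<and> mu e r = y)"

text \<open>Delay; only used for 0 <= f < C_e, where it is finite.\<close>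
definition delay :: "('e \<Rightarrow> real \<Rightarrow> real) \<Rightarrow> 'e \<Rightarrow> real \<Rightarrow> real" where
  "delay mu e y = (if y = 0 then 1 / deriv0 mu e else mu_inv mu e y / y)"

definition Fset :: "('e::finite \<Rightarrow> real \<Rightarrow> real) \<Rightarrow> (real^'e) set" where
  "Fset mu = {f. \<forall>e. 0 \<le> f $ e \<and> ereal (f $ e) < cap mu e}"

definition fpi :: "('p::finite \<Rightarrow> 'e list) \<Rightarrow> real^'p \<Rightarrow> real^'e::finite" where
  "fpi pth \<pi> = (\<chi> e. \<Sum>p\<in>{p. e \<in> set (pth p)}. \<pi> $ p)"

definition psimplex :: "(real^'p::finite) set" where
  "psimplex = {\<pi>. (\<forall>p. 0 \<le> \<pi> $ p) \<and> (\<Sum>p\<in>UNIV. \<pi> $ p) = 1}"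

definition Pi_set :: "('p::finite \<Rightarrow> 'e list) \<Rightarrow> ('e::finite \<Rightarrow> real \<Rightarrow> real) \<Rightarrow> (real^'p) set" where
  "Pi_set pth mu = {\<pi>\<in>psimplex. \<forall>e. ereal (fpi pth \<pi> $ e) < cap mu e}"

definition mincut :: "nat \<Rightarrow> ('e::finite \<Rightarrow> nat) \<Rightarrow> ('e \<Rightarrow> nat) \<Rightarrow> ('e \<Rightarrow> real \<Rightarrow> real) \<Rightarrow> ereal" where
  "mincut n src dst mu = Min ((\<lambda>U. \<Sum>e\<in>{e. src e \<in> U \<and> dst e \<notin> U}. cap mu e) `
      {U. U \<subseteq> {0..n} \<and> 0 \<in> U \<and> n \<notin> U})"

definition hyp :: "(real^'p::finite) set" where
  "hyp = {x. (\<Sum>p\<in>UNIV. x $ p) = 1}"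

definition rint :: "(real^'p::finite) set \<Rightarrow> (real^'p) set" where
  "rint S = {x\<in>S. \<exists>\<epsilon>>0. ball x \<epsilon> \<inter> hyp \<subseteq> S}"

definition rbd :: "(real^'p::finite) set \<Rightarrow> (real^'p) set" where
  "rbd S = closure S - rint S"

definition strict_convex_on :: "(real^'p::finite) set \<Rightarrow> (real^'p \<Rightarrow> real) \<Rightarrow> bool" where
  "strict_convex_on S g \<longleftrightarrow> (\<forall>x\<in>S. \<forall>y\<in>S. x \<noteq> y \<longrightarrow> (\<forall>t. 0 < t \<and> t < 1 \<longrightarrow>
      g ((1 - t) *\<^sub>R x + t *\<^sub>R y) < (1 - t) * g x + t * g y))"

text \<open>Admissible perturbation.  gh x is the projected gradient Phi (grad h)(x), i.e.
  the gradient of h along the hyperplane (a vector with zero coordinate sum).\<close>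
definition admissible_pert ::
  "('p::finite \<Rightarrow> 'e list) \<Rightarrow> ('e::finite \<Rightarrow> real \<Rightarrow> real) \<Rightarrow> (real^'p) set \<Rightarrow> (real^'p \<Rightarrow> real) \<Rightarrow> bool" where
  "admissible_pert pth mu Ph h \<longleftrightarrow>
     Ph \<subseteq> Pi_set pth mu \<and> closed Ph \<and> convex Ph \<and> rint Ph \<noteq> {} \<and>
     strict_convex_on Ph h \<and>
     (\<exists>gh :: real^'p \<Rightarrow> real^'p.
        (\<forall>x\<in>rint Ph. (\<Sum>p\<in>UNIV. gh x $ p) = 0 \<and>
            (h has_derivative (\<lambda>v. gh x \<bullet> v)) (at x within Ph) \<and>
            gh differentiable (at x within Ph)) \<and>
        (\<forall>b\<in>rbd Ph. filterlim (\<lambda>x. norm (gh x)) at_top (at b within rint Ph)))"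

definition Fh ::
  "('p::finite \<Rightarrow> 'e list) \<Rightarrow> ('e::finite \<Rightarrow> real \<Rightarrow> real) \<Rightarrow> (real^'p) set \<Rightarrow> (real^'p \<Rightarrow> real)
     \<Rightarrow> real^'e \<Rightarrow> real^'p" where
  "Fh pth mu Ph h f = (THE \<omega>. \<omega> \<in> Ph \<and> (\<forall>\<omega>'\<in>Ph.
      (\<Sum>p\<in>UNIV. \<omega> $ p * (\<Sum>e\<in>set (pth p). delay mu e (f $ e))) + h \<omega>
    \<le> (\<Sum>p\<in>UNIV. \<omega>' $ p * (\<Sum>e\<in>set (pth p). delay mu e (f $ e))) + h \<omega>'))"

text \<open>G v takes the full flow vector, but is only ever applied to
  the restriction of f to the links leaving v (other coordinates set to 0);
  only its coordinates on links leaving v are meaningful.\<close>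

definition restr :: "('e::finite \<Rightarrow> nat) \<Rightarrow> nat \<Rightarrow> real^'e \<Rightarrow> real^'e" where
  "restr src v f = (\<chi> e. if src e = v then f $ e else 0)"

definition Fv :: "('e::finite \<Rightarrow> nat) \<Rightarrow> ('e \<Rightarrow> real \<Rightarrow> real) \<Rightarrow> nat \<Rightarrow> (real^'e) set" where
  "Fv src mu v = {x. \<forall>e. if src e = v then 0 \<le> x $ e \<and> ereal (x $ e) < cap mu e else x $ e = 0}"

definition local_decisions ::
  "nat \<Rightarrow> ('e::finite \<Rightarrow> nat) \<Rightarrow> ('p::finite \<Rightarrow> 'e list) \<Rightarrow> ('e \<Rightarrow> real \<Rightarrow> real)
     \<Rightarrow> (nat \<Rightarrow> real^'e \<Rightarrow> real^'p \<Rightarrow> real^'e) \<Rightarrow> bool" where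
  "local_decisions n src pth mu G \<longleftrightarrow> (\<forall>v<n.
     \<comment> \<open>values in the psimplex over the outgoing links\<close>
     (\<forall>x\<in>Fv src mu v. \<forall>\<pi>\<in>Pi_set pth mu.
        (\<forall>e. src e = v \<longrightarrow> 0 \<le> G v x \<pi> $ e) \<and> (\<Sum>e\<in>{e. src e = v}. G v x \<pi> $ e) = 1) \<and>
     \<comment> \<open>continuously differentiable on F_v x Pi\<close>
     (\<exists>D. (\<forall>z\<in>Fv src mu v \<times> Pi_set pth mu.
            ((\<lambda>(x, \<pi>). G v x \<pi>) has_derivative blinfun_apply (D z)) (at z within Fv src mu v \<times> Pi_set pth mu))
          \<and> continuous_on (Fv src mu v \<times> Pi_set pth mu) D) \<and>
     \<comment> \<open>consistency\<close>
     (\<forall>\<pi>\<in>Pi_set pth mu. \<forall>e. src e = v \<longrightarrow>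
        (\<Sum>j\<in>{j. src j = v}. fpi pth \<pi> $ j) * G v (restr src v (fpi pth \<pi>)) \<pi> $ e = fpi pth \<pi> $ e) \<and>
     \<comment> \<open>cooperativity: partial derivative of G_j w.r.t. f_e is nonnegative, j ~= e\<close>
     (\<forall>x\<in>Fv src mu v. \<forall>\<pi>\<in>Pi_set pth mu. \<forall>j e d. src j = v \<longrightarrow> src e = v \<longrightarrow> j \<noteq> e \<longrightarrow>
        ((\<lambda>s. G v (x + s *\<^sub>R axis e 1) \<pi> $ j) has_real_derivative d)
           (at 0 within {s. x + s *\<^sub>R axis e 1 \<in> Fv src mu v}) \<longrightarrow> 0 \<le> d))"

definition Hfun ::
  "('e::finite \<Rightarrow> nat) \<Rightarrow> ('e \<Rightarrow> nat) \<Rightarrow> (nat \<Rightarrow> real^'e \<Rightarrow> real^'p \<Rightarrow> real^'e)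
     \<Rightarrow> real^'e \<Rightarrow> real^'p \<Rightarrow> real^'e" where
  "Hfun src dst G f \<pi> = (\<chi> e. let v = src e in
     (if v = 0 then G v (restr src v f) \<pi> $ e - f $ e
      else (\<Sum>j\<in>{j. dst j = v}. f $ j) * G v (restr src v f) \<pi> $ e - f $ e))"

definition muvec :: "('e::finite \<Rightarrow> real \<Rightarrow> real) \<Rightarrow> real^'e \<Rightarrow> real^'e" where
  "muvec mu \<rho> = (\<chi> e. mu e (\<rho> $ e))"

definition is_solution ::
  "('e::finite \<Rightarrow> nat) \<Rightarrow> ('e \<Rightarrow> nat) \<Rightarrow> ('p::finite \<Rightarrow> 'e list) \<Rightarrow> ('e \<Rightarrow> real \<Rightarrow> real)
    \<Rightarrow> (real^'p) set \<Rightarrow> (real^'p \<Rightarrow> real) \<Rightarrow> (nat \<Rightarrow> real^'e \<Rightarrow> real^'p \<Rightarrow> real^'e) \<Rightarrow> real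
    \<Rightarrow> (real \<Rightarrow> real^'p) \<Rightarrow> (real \<Rightarrow> real^'e) \<Rightarrow> bool" where
  "is_solution src dst pth mu Ph h G \<eta> \<pi> \<rho> \<longleftrightarrow> (\<forall>t\<ge>0.
     \<pi> t \<in> Pi_set pth mu \<and> (\<forall>e. 0 \<le> \<rho> t $ e) \<and>
     (\<pi> has_vector_derivative \<eta> *\<^sub>R (Fh pth mu Ph h (muvec mu (\<rho> t)) - \<pi> t)) (at t within {0..}) \<and>
     (\<rho> has_vector_derivative Hfun src dst G (muvec mu (\<rho> t)) (\<pi> t)) (at t within {0..}))"

definition admissible_init :: "('p::finite \<Rightarrow> 'e list) \<Rightarrow> ('e::finite \<Rightarrow> real \<Rightarrow> real) \<Rightarrow> real^'p \<Rightarrow> real^'e \<Rightarrow> bool" where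
  "admissible_init pth mu \<pi>0 \<rho>0 \<longleftrightarrow> \<pi>0 \<in> Pi_set pth mu \<and> (\<forall>p. 0 < \<pi>0 $ p) \<and> (\<forall>e. 0 < \<rho>0 $ e)"

end

theory Submission
  imports Defs
begin

lemma supp_ineq:
  fixes h :: "real^'p::finite \<Rightarrow> real"
  assumes conv: "convex Ph" and scv: "strict_convex_on Ph h" and x: "x \<in> Ph" and y: "y \<in> Ph"
    and der: "(h has_derivative (\<lambda>v. g \<bullet> v)) (at x within Ph)"
  shows "h x + g \<bullet> (y - x) \<le> h y"
proof (cases "x = y")
  case True then show ?thesis by simp
next
  case False
  define d where "d = y - x"
  define l where "l = (\<lambda>t::real. x + t *\<^sub>R d)"
  have lin: "l t \<in> Ph" if "t \<in> {0..1}" for t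
  proof -
    have "l t = (1 - t) *\<^sub>R x + t *\<^sub>R y" by (simp add: l_def d_def algebra_simps)
    then show ?thesis using convexD_alt[OF conv x y, of t] that by auto
  qed
  have ld: "(l has_derivative (\<lambda>t. t *\<^sub>R d)) (at 0 within {0..1})"
    unfolding l_def by (auto intro!: derivative_eq_intros)
  have l0: "l 0 = x" by (simp add: l_def)
  have "((h \<circ> l) has_derivative (\<lambda>t. g \<bullet> (t *\<^sub>R d))) (at 0 within {0..1})"
  proof -
    have "(h has_derivative (\<lambda>v. g \<bullet> v)) (at (l 0) within l ` {0..1})"
      using has_derivative_subset[OF der, of "l ` {0..1}"] l0 lin by (auto simp: image_subset_iff)
    from has_derivative_in_compose[OF ld this] show ?thesis by (simp add: o_def)
  qed
  then have "((h \<circ> l) has_real_derivative (g \<bullet> d)) (at 0 within {0..1})"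
    unfolding has_field_derivative_def
    by (rule has_derivative_eq_rhs) (auto simp: fun_eq_iff)
  then have lim: "((\<lambda>t. ((h \<circ> l) t - (h \<circ> l) 0) / (t - 0)) \<longlongrightarrow> g \<bullet> d) (at 0 within {0..1})"
    using has_field_derivative_iff by blast
  have ev: "eventually (\<lambda>t. ((h \<circ> l) t - (h \<circ> l) 0) / (t - 0) \<le> h y - h x) (at 0 within {0..1})"
    unfolding eventually_at_filter
  proof (intro always_eventually allI impI)
    fix t :: real assume t: "t \<noteq> 0" "t \<in> {0..1}"
    show "((h \<circ> l) t - (h \<circ> l) 0) / (t - 0) \<le> h y - h x"
    proof (cases "t = 1")
      case True then show ?thesis by (simp add: l_def d_def)
    next
      case False
      then have tt: "0 < t" "t < 1" using t by auto
      have "h ((1 - t) *\<^sub>R x + t *\<^sub>R y) < (1 - t) * h x + t * h y"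
        using scv x y \<open>x \<noteq> y\<close> tt unfolding strict_convex_on_def by blast
      moreover have "l t = (1 - t) *\<^sub>R x + t *\<^sub>R y" by (simp add: l_def d_def algebra_simps)
      ultimately have "h (l t) < (1 - t) * h x + t * h y" by simp
      then have "h (l t) - h x \<le> t * (h y - h x)" by (simp add: algebra_simps)
      then show ?thesis using tt by (simp add: l0 divide_simps mult.commute)
    qed
  qed
  have "g \<bullet> d \<le> h y - h x"
    apply (rule tendsto_upperbound[OF lim ev])
    by (simp add: at_within_Icc_at_right)
  then show ?thesis by (simp add: d_def)
qed

lemma psimplex_hyp: "psimplex \<subseteq> (hyp :: (real^'p::finite) set)"
  by (auto simp: psimplex_def hyp_def)

lemma psimplex_bounded: "bounded (psimplex :: (real^'p::finite) set)"
proof -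
  have "norm x \<le> (\<Sum>p\<in>UNIV. \<bar>x $ p\<bar>)" for x :: "real^'p"
    by (metis norm_le_l1_cart)
  moreover have "(\<Sum>p\<in>UNIV. \<bar>x $ p\<bar>) = 1" if "x \<in> psimplex" for x :: "real^'p"
    using that by (simp add: psimplex_def)
  ultimately show ?thesis unfolding bounded_iff by (metis (no_types, lifting))
qed

lemma sum_vec_add: "(\<Sum>p\<in>UNIV. (x + y) $ p) = (\<Sum>p\<in>UNIV. x $ p) + (\<Sum>p\<in>UNIV. (y::real^'p::finite) $ p)"
  by (simp add: sum.distrib)

lemma sum_vec_scale: "(\<Sum>p\<in>UNIV. (a *\<^sub>R x) $ p) = a * (\<Sum>p\<in>UNIV. (x::real^'p::finite) $ p)"
  by (simp add: sum_distrib_left)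

lemma sum_vec_diff: "(\<Sum>p\<in>UNIV. (x - y) $ p) = (\<Sum>p\<in>UNIV. x $ p) - (\<Sum>p\<in>UNIV. (y::real^'p::finite) $ p)"
  by (simp add: sum_subtractf)

lemma seg_rint:
  fixes Ph :: "(real^'p::finite) set"
  assumes conv: "convex Ph" and sub: "Ph \<subseteq> hyp" and b: "b \<in> Ph" and x0: "x0 \<in> rint Ph"
    and s: "0 < s" "s \<le> 1"
  shows "b + s *\<^sub>R (x0 - b) \<in> rint Ph"
proof -
  obtain e where e: "e > 0" "ball x0 e \<inter> hyp \<subseteq> Ph" and x0P: "x0 \<in> Ph"
    using x0 by (auto simp: rint_def)
  let ?y = "b + s *\<^sub>R (x0 - b)"
  have yP: "?y \<in> Ph"
  proof -
    have "?y = (1 - s) *\<^sub>R b + s *\<^sub>R x0" by (simp add: algebra_simps)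
    then show ?thesis using convexD_alt[OF conv b x0P, of s] s by auto
  qed
  have "ball ?y (s * e) \<inter> hyp \<subseteq> Ph"
  proof
    fix z assume z: "z \<in> ball ?y (s * e) \<inter> hyp"
    define w where "w = (1/s) *\<^sub>R (z - (1 - s) *\<^sub>R b)"
    have zw: "z = (1 - s) *\<^sub>R b + s *\<^sub>R w" using s by (simp add: w_def algebra_simps)
    have "w - x0 = (1/s) *\<^sub>R (z - ?y)" using s by (simp add: w_def algebra_simps)
    then have "norm (w - x0) = (1/s) * norm (z - ?y)" using s by simp
    also have "\<dots> < (1/s) * (s * e)" using z s by (auto simp: dist_norm norm_minus_commute pos_divide_less_eq mult.commute)
    finally have "dist x0 w < e" using s by (simp add: dist_norm norm_minus_commute)
    moreover have "w \<in> hyp"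
    proof -
      have "(\<Sum>p\<in>UNIV. z $ p) = 1" "(\<Sum>p\<in>UNIV. b $ p) = 1" using z b sub by (auto simp: hyp_def)
      then have "(\<Sum>x\<in>UNIV. (z $ x - (1 - s) * b $ x) / s) = (1 - (1 - s) * 1) / s"
        by (simp add: sum_divide_distrib[symmetric] sum_subtractf sum_distrib_left[symmetric])
      then show ?thesis using s by (simp add: hyp_def w_def)
    qed
    ultimately have "w \<in> Ph" using e by auto
    then show "z \<in> Ph" using zw convexD_alt[OF conv b, of w s] s by auto
  qed
  then show ?thesis using yP e s by (auto simp: rint_def intro!: exI[of _ "s*e"])
qed

lemma minimizer_exists:
  fixes Ph :: "(real^'p::finite) set" and h :: "real^'p \<Rightarrow> real" and c :: "real^'p"
  assumes adm: "admissible_pert pth mu Ph h"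
  shows "\<exists>!\<omega>. \<omega> \<in> Ph \<and> (\<forall>\<omega>'\<in>Ph. c \<bullet> \<omega> + h \<omega> \<le> c \<bullet> \<omega>' + h \<omega>')"
proof -
  have subPi: "Ph \<subseteq> Pi_set pth mu" and cl: "closed Ph" and conv: "convex Ph"
    and ne: "rint Ph \<noteq> {}" and scv: "strict_convex_on Ph h"
    using adm by (auto simp: admissible_pert_def)
  obtain gh :: "real^'p \<Rightarrow> real^'p" where
    ghs: "\<And>x. x \<in> rint Ph \<Longrightarrow> (\<Sum>p\<in>UNIV. gh x $ p) = 0"
    and ghd: "\<And>x. x \<in> rint Ph \<Longrightarrow> (h has_derivative (\<lambda>v. gh x \<bullet> v)) (at x within Ph)"
    and ghb: "\<And>b. b \<in> rbd Ph \<Longrightarrow> filterlim (\<lambda>x. norm (gh x)) at_top (at b within rint Ph)"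
    using adm unfolding admissible_pert_def by metis
  have subS: "Ph \<subseteq> psimplex" using subPi by (auto simp: Pi_set_def)
  have subH: "Ph \<subseteq> hyp" using subS psimplex_hyp by blast
  have bdd: "bounded Ph" using subS psimplex_bounded bounded_subset by blast
  have cpt: "compact Ph" using bdd cl by (simp add: compact_eq_bounded_closed)
  obtain B where B: "\<And>y. y \<in> Ph \<Longrightarrow> norm y \<le> B" using bdd unfolding bounded_iff by blast
  define \<phi> where "\<phi> = (\<lambda>\<omega>. c \<bullet> \<omega> + h \<omega>)"
  have rintP: "rint Ph \<subseteq> Ph" by (auto simp: rint_def)
  have SUP: "\<phi> x + (c + gh x) \<bullet> (y - x) \<le> \<phi> y" if "x \<in> rint Ph" "y \<in> Ph" for x y
  proof -
    have "h x + gh x \<bullet> (y - x) \<le> h y"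
      using supp_ineq[OF conv scv _ that(2) ghd[OF that(1)]] that rintP by auto
    then show ?thesis by (simp add: \<phi>_def inner_add_left inner_diff_right)
  qed
  obtain x0 where x0: "x0 \<in> rint Ph" using ne by blast
  have x0P: "x0 \<in> Ph" using x0 rintP by blast
  obtain e0 where e0: "e0 > 0" "ball x0 e0 \<inter> hyp \<subseteq> Ph" using x0 by (auto simp: rint_def)
  have "continuous (at x0 within Ph) h" using has_derivative_continuous[OF ghd[OF x0]] .
  then obtain dl where dl: "dl > 0" "\<And>y. y \<in> Ph \<Longrightarrow> dist y x0 < dl \<Longrightarrow> dist (h y) (h x0) < 1"
    unfolding continuous_within_eps_delta by (metis zero_less_one)
  define L where "L = \<phi> x0 - norm (c + gh x0) * (2 * B)"
  have Lb: "L \<le> \<phi> y" if "y \<in> Ph" for y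
  proof -
    have "- ((c + gh x0) \<bullet> (y - x0)) \<le> norm (c + gh x0) * norm (y - x0)"
      using norm_cauchy_schwarz[of "c + gh x0" "x0 - y"] by (simp add: inner_diff_right norm_minus_commute)
    also have "norm (y - x0) \<le> 2 * B" using B[OF that] B[OF x0P] norm_triangle_ineq4[of y x0] by linarith
    then have "norm (c + gh x0) * norm (y - x0) \<le> norm (c + gh x0) * (2 * B)"
      by (simp add: mult_left_mono)
    finally show ?thesis using SUP[OF x0 that] by (simp add: L_def)
  qed
  define m where "m = Inf (\<phi> ` Ph)"
  have bddb: "bdd_below (\<phi> ` Ph)" using Lb by (auto intro!: bdd_belowI2)
  have mle: "m \<le> \<phi> y" if "y \<in> Ph" for y
    unfolding m_def using bddb that by (simp add: cInf_lower)
  have "\<exists>w. w \<in> Ph \<and> \<phi> w < m + 1 / (real k + 1)" for k :: nat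
  proof -
    have "Inf (\<phi> ` Ph) < m + 1 / (real k + 1)" by (simp add: m_def)
    then obtain v where "v \<in> \<phi> ` Ph" "v < m + 1 / (real k + 1)"
      using cInf_lessD[of "\<phi> ` Ph"] x0P by blast
    then show ?thesis by blast
  qed
  then obtain w where w: "\<And>k. w k \<in> Ph" "\<And>k. \<phi> (w k) < m + 1 / (real k + 1)" by metis
  obtain b r where b: "b \<in> Ph" and r: "strict_mono r" and lim: "(w \<circ> r) \<longlonglongrightarrow> b"
    using cpt w(1) unfolding compact_def by metis
  have key: "\<phi> x + (c + gh x) \<bullet> (b - x) \<le> m" if x: "x \<in> rint Ph" for x
  proof -
    have l1: "(\<lambda>k. \<phi> x + (c + gh x) \<bullet> (w (r k) - x)) \<longlonglongrightarrow> \<phi> x + (c + gh x) \<bullet> (b - x)"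
      using lim by (auto intro!: tendsto_intros simp: o_def)
    have l2: "(\<lambda>k. m + 1 / (real k + 1)) \<longlonglongrightarrow> m + 0"
      by (intro tendsto_add tendsto_const) (use LIMSEQ_inverse_real_of_nat in \<open>simp add: inverse_eq_divide add.commute\<close>)
    have "\<phi> x + (c + gh x) \<bullet> (w (r k) - x) \<le> m + 1 / (real k + 1)" for k
    proof -
      have "\<phi> x + (c + gh x) \<bullet> (w (r k) - x) \<le> \<phi> (w (r k))" using SUP[OF x w(1)] .
      also have "\<dots> < m + 1 / (real (r k) + 1)" by (rule w(2))
      also have "\<dots> \<le> m + 1 / (real k + 1)"
        using seq_suble[OF r, of k] by (simp add: frac_le)
      finally show ?thesis by simp
    qed
    then show ?thesis using LIMSEQ_le[OF l1 l2] by simp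
  qed
  have exist: "\<exists>\<omega>. \<omega> \<in> Ph \<and> (\<forall>\<omega>'\<in>Ph. \<phi> \<omega> \<le> \<phi> \<omega>')"
  proof (cases "b \<in> rint Ph")
    case True
    then have "\<phi> b \<le> m" using key[OF True] by simp
    then show ?thesis using b mle by force
  next
    case False
    have brbd: "b \<in> rbd Ph" using False b cl by (simp add: rbd_def closure_closed)
    define K where "K = (norm c * B + h x0 + 1 - L) / (min e0 dl / 2) + norm c"
    define T where "T = max K 0 + 1"
    have "eventually (\<lambda>y. T \<le> norm (gh y)) (at b within rint Ph)"
      using ghb[OF brbd] unfolding filterlim_at_top by blast
    then obtain dd where dd: "dd > 0" "\<And>y. y \<in> rint Ph \<Longrightarrow> y \<noteq> b \<Longrightarrow> dist y b < dd \<Longrightarrow> T \<le> norm (gh y)"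
      unfolding eventually_at by blast
    have x0b: "x0 \<noteq> b" using x0 False by blast
    then have nxb: "norm (x0 - b) > 0" by simp
    define s where "s = min (1/2) (dd / (2 * norm (x0 - b)))"
    have s: "0 < s" "s \<le> 1/2" using dd nxb by (auto simp: s_def)
    define y where "y = b + s *\<^sub>R (x0 - b)"
    have yr: "y \<in> rint Ph" using seg_rint[OF conv subH b x0, of s] s by (simp add: y_def)
    have yP: "y \<in> Ph" using yr rintP by blast
    have "dist y b = s * norm (x0 - b)" using s by (simp add: y_def dist_norm)
    also have "\<dots> \<le> dd / (2 * norm (x0 - b)) * norm (x0 - b)"
      by (rule mult_right_mono) (auto simp: s_def)
    also have "\<dots> < dd" using nxb dd by simp
    finally have "dist y b < dd" .
    moreover have "y \<noteq> b" using s x0b by (simp add: y_def)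
    ultimately have Tg: "T \<le> norm (gh y)" using dd yr by blast
    define g where "g = gh y"
    define ng where "ng = norm g"
    have ngpos: "ng > 0" "ng > K" using Tg by (auto simp: T_def ng_def g_def)
    define v where "v = c + g"
    have "\<phi> y + v \<bullet> (b - y) \<le> m" using key[OF yr] by (simp add: v_def g_def)
    then have "v \<bullet> (b - y) \<le> 0" using mle[OF yP] by linarith
    moreover have "b - y = - s *\<^sub>R (x0 - b)" by (simp add: y_def)
    ultimately have "0 \<le> s * (v \<bullet> (x0 - b))" by simp
    then have vxb: "0 \<le> v \<bullet> (x0 - b)" using s by (simp add: zero_le_mult_iff)
    have "x0 - y = (1 - s) *\<^sub>R (x0 - b)" by (simp add: y_def algebra_simps)
    then have vxy: "0 \<le> v \<bullet> (x0 - y)" using vxb s by simp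
    define rr where "rr = min e0 dl / 2"
    have rr: "rr > 0" "rr < e0" "rr < dl" using e0 dl by (auto simp: rr_def)
    define u where "u = (1 / ng) *\<^sub>R g"
    have nu: "norm u = 1" using ngpos by (simp add: u_def ng_def)
    have su: "(\<Sum>p\<in>UNIV. u $ p) = 0" using ghs[OF yr] by (simp add: u_def g_def sum_divide_distrib[symmetric])
    define z where "z = x0 + rr *\<^sub>R u"
    have dz: "dist z x0 = rr" using nu rr by (simp add: z_def dist_norm)
    have zh: "z \<in> hyp" using su subH x0P by (auto simp: hyp_def z_def sum.distrib sum_distrib_left[symmetric])
    have zP: "z \<in> Ph" using dz rr zh e0 by (auto simp: dist_commute)
    have "\<phi> y + v \<bullet> (z - y) \<le> \<phi> z" using SUP[OF yr zP] by (simp add: v_def g_def)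
    moreover have "v \<bullet> (z - y) = v \<bullet> (x0 - y) + rr * (c \<bullet> u + g \<bullet> u)"
      by (simp add: z_def v_def inner_add_right inner_add_left algebra_simps)
    moreover have "g \<bullet> u = ng" using ngpos by (simp add: u_def ng_def power2_norm_eq_inner[symmetric] power2_eq_square)
    moreover have "c \<bullet> u \<ge> - norm c" using norm_cauchy_schwarz[of "-c" u] nu by simp
    moreover have "\<phi> z \<le> norm c * B + h x0 + 1"
    proof -
      have "c \<bullet> z \<le> norm c * B" using norm_cauchy_schwarz[of c z] B[OF zP]
        by (meson mult_left_mono norm_ge_zero order_trans)
      moreover have "h z < h x0 + 1" using dl(2)[OF zP] dz rr by (simp add: dist_real_def)
      ultimately show ?thesis by (simp add: \<phi>_def)
    qed
    moreover have "L \<le> \<phi> y" using Lb[OF yP] .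
    ultimately have "L + rr * (ng - norm c) \<le> norm c * B + h x0 + 1"
      using vxy rr(1) by (smt (verit, ccfv_SIG) mult_left_mono)
    then have "rr * (ng - norm c) \<le> norm c * B + h x0 + 1 - L" by linarith
    then have "ng - norm c \<le> (norm c * B + h x0 + 1 - L) / rr" using rr(1)
      by (simp add: pos_le_divide_eq mult.commute)
    then have "ng \<le> K" by (simp add: K_def rr_def)
    then show ?thesis using ngpos by simp
  qed
  show ?thesis
  proof (rule ex_ex1I)
    show "\<exists>\<omega>. \<omega> \<in> Ph \<and> (\<forall>\<omega>'\<in>Ph. c \<bullet> \<omega> + h \<omega> \<le> c \<bullet> \<omega>' + h \<omega>')"
      using exist by (simp add: \<phi>_def)
  next
    fix x y
    assume x: "x \<in> Ph \<and> (\<forall>\<omega>'\<in>Ph. c \<bullet> x + h x \<le> c \<bullet> \<omega>' + h \<omega>')"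
      and y: "y \<in> Ph \<and> (\<forall>\<omega>'\<in>Ph. c \<bullet> y + h y \<le> c \<bullet> \<omega>' + h \<omega>')"
    show "x = y"
    proof (rule ccontr)
      assume xy: "x \<noteq> y"
      define z where "z = (1 - 1/2) *\<^sub>R x + (1/2::real) *\<^sub>R y"
      have zP: "z \<in> Ph" using convexD_alt[OF conv, of x y "1/2"] x y by (simp add: z_def)
      have "h z < (1 - 1/2) * h x + 1/2 * h y"
      proof -
        have "(0::real) < 1/2 \<and> (1/2::real) < 1" by simp
        then show ?thesis using scv x y xy unfolding strict_convex_on_def z_def by blast
      qed
      moreover have "c \<bullet> z = (1 - 1/2) * (c \<bullet> x) + 1/2 * (c \<bullet> y)" by (simp add: z_def inner_add_right)
      ultimately have "c \<bullet> z + h z < (1 - 1/2) * (c \<bullet> x + h x) + 1/2 * (c \<bullet> y + h y)" by (simp add: field_simps)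
      moreover have "c \<bullet> x + h x \<le> c \<bullet> z + h z" "c \<bullet> y + h y \<le> c \<bullet> z + h z" using x y zP by auto
      ultimately show False by (simp add: field_simps)
    qed
  qed
qed

lemma Fh_in:
  assumes adm: "admissible_pert pth mu Ph h"
  shows "Fh pth mu Ph h f \<in> Ph"
proof -
  define c where "c = (\<chi> p. (\<Sum>e\<in>set (pth p). delay mu e (f $ e)))"
  have eq: "(\<Sum>p\<in>UNIV. \<omega> $ p * (\<Sum>e\<in>set (pth p). delay mu e (f $ e))) = c \<bullet> \<omega>" for \<omega>
    by (simp add: c_def inner_vec_def mult.commute)
  have "Fh pth mu Ph h f = (THE \<omega>. \<omega> \<in> Ph \<and> (\<forall>\<omega>'\<in>Ph. c \<bullet> \<omega> + h \<omega> \<le> c \<bullet> \<omega>' + h \<omega>'))"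
    unfolding Fh_def by (simp only: eq)
  then show ?thesis using theI'[OF minimizer_exists[OF adm, of c]] by simp
qed

definition ind :: "('p::finite \<Rightarrow> 'e list) \<Rightarrow> 'e \<Rightarrow> real^'p" where
  "ind pth e = (\<chi> p. if e \<in> set (pth p) then 1 else 0)"

lemma fpi_inner: "fpi pth \<pi> $ e = \<pi> \<bullet> ind pth e"
proof -
  have "(\<Sum>i\<in>UNIV. \<pi> $ i * (if e \<in> set (pth i) then 1 else 0)) = (\<Sum>i\<in>UNIV. (if e \<in> set (pth i) then \<pi> $ i else 0))"
    by (rule sum.cong) auto
  also have "\<dots> = sum (($) \<pi>) {p. e \<in> set (pth p)}"
    using sum.inter_filter[of UNIV "($) \<pi>" "\<lambda>p. e \<in> set (pth p)"] by simp
  finally show ?thesis by (simp add: fpi_def ind_def inner_vec_def)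
qed

lemma fpi_le1: "\<pi> \<in> psimplex \<Longrightarrow> fpi pth \<pi> $ e \<le> 1"
proof -
  assume "\<pi> \<in> psimplex"
  then have "\<forall>p. 0 \<le> \<pi> $ p" "(\<Sum>p\<in>UNIV. \<pi> $ p) = 1" by (auto simp: psimplex_def)
  moreover have "(\<Sum>p\<in>{p. e \<in> set (pth p)}. \<pi> $ p) \<le> (\<Sum>p\<in>UNIV. \<pi> $ p)"
    by (rule sum_mono2) (use \<open>\<forall>p. 0 \<le> \<pi> $ p\<close> in auto)
  ultimately show ?thesis unfolding fpi_def by simp
qed

lemma fpi_ge0: "\<pi> \<in> psimplex \<Longrightarrow> 0 \<le> fpi pth \<pi> $ e"
  by (auto simp: psimplex_def fpi_def intro!: sum_nonneg)

lemma decay_bound: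
  fixes g :: "real \<Rightarrow> real"
  assumes eta: "\<eta> > 0" and t: "t \<ge> 0"
    and der: "\<And>s. s \<ge> 0 \<Longrightarrow> (g has_real_derivative g' s) (at s within {0..})"
    and le: "\<And>s. s \<ge> 0 \<Longrightarrow> g' s \<le> \<eta> * (M - g s)"
  shows "(g t - M) * exp (\<eta> * t) \<le> g 0 - M"
proof -
  define w where "w = (\<lambda>s. (g s - M) * exp (\<eta> * s))"
  have dw: "(w has_real_derivative (g' s * exp (\<eta> * s) + (g s - M) * (exp (\<eta> * s) * \<eta>))) (at s within {0..})"
    if "s \<ge> 0" for s
  proof -
    have d1: "((\<lambda>s. g s - M) has_real_derivative g' s - 0) (at s within {0..})"
      by (rule DERIV_diff[OF der[OF that] DERIV_const])
    have d2: "((\<lambda>s. exp (\<eta> * s)) has_real_derivative exp (\<eta> * s) * \<eta>) (at s within {0..})"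
    proof -
      show ?thesis by (rule DERIV_chain2[OF DERIV_exp DERIV_cmult_Id])
    qed
    show ?thesis unfolding w_def by (rule DERIV_cong[OF DERIV_mult[OF d1 d2]]) (simp add: algebra_simps)
  qed
  have "w t \<le> w 0"
  proof (rule DERIV_nonpos_imp_decreasing_open[OF t])
    fix x assume x: "0 < x" "x < t"
    have "(w has_real_derivative (g' x * exp (\<eta> * x) + (g x - M) * (exp (\<eta> * x) * \<eta>))) (at x within {0<..})"
      by (rule DERIV_subset[OF dw]) (use x in auto)
    then have "(w has_real_derivative (g' x * exp (\<eta> * x) + (g x - M) * (exp (\<eta> * x) * \<eta>))) (at x)"
      by (subst (asm) at_within_open) (use x in auto)
    moreover have "g' x * exp (\<eta> * x) + (g x - M) * (exp (\<eta> * x) * \<eta>) \<le> 0"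
    proof -
      have "g' x * exp (\<eta> * x) \<le> \<eta> * (M - g x) * exp (\<eta> * x)"
        using le[of x] x by (intro mult_right_mono) auto
      then show ?thesis by (simp add: algebra_simps)
    qed
    ultimately show "\<exists>y. (w has_real_derivative y) (at x) \<and> y \<le> 0" by blast
  next
    have "continuous (at x within {0..}) w" if "x \<ge> 0" for x
      using dw[OF that] by (rule DERIV_continuous)
    then show "continuous_on {0..t} w"
      unfolding continuous_on_eq_continuous_within
      by (meson atLeastAtMost_iff atLeast_iff continuous_within_subset subsetI)
  qed
  then show ?thesis by (simp add: w_def)
qed

theorem lemma4:
  fixes n :: nat and src dst :: "'e::finite \<Rightarrow> nat" and pth :: "'p::finite \<Rightarrow> 'e list"
    and mu :: "'e \<Rightarrow> real \<Rightarrow> real" and Ph :: "(real^'p) set" and h :: "real^'p \<Rightarrow> real"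
  assumes "network n src dst pth"
    and "flow_density mu"
    and "mincut n src dst mu > 1"
    and "admissible_pert pth mu Ph h"
  shows "\<exists>Cbar :: 'e \<Rightarrow> real. (\<forall>e. ereal (Cbar e) < cap mu e) \<and>
    (\<forall>G. local_decisions n src pth mu G \<longrightarrow>
      (\<forall>\<eta>>0. \<exists>t0\<ge>0. \<forall>\<pi> \<rho>.
         admissible_init pth mu (\<pi> 0) (\<rho> 0) \<and> is_solution src dst pth mu Ph h G \<eta> \<pi> \<rho> \<longrightarrow>
         (\<forall>t\<ge>t0. \<forall>e. fpi pth (\<pi> t) $ e \<le> Cbar e)))"
proof -
  note adm = assms(4)
  have subPi: "Ph \<subseteq> Pi_set pth mu" and cl: "closed Ph" and ne: "rint Ph \<noteq> {}"
    using adm by (auto simp: admissible_pert_def)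
  have subS: "Ph \<subseteq> psimplex" using subPi by (auto simp: Pi_set_def)
  have bdd: "bounded Ph" using subS psimplex_bounded bounded_subset by blast
  have cpt: "compact Ph" using bdd cl by (simp add: compact_eq_bounded_closed)
  have Pne: "Ph \<noteq> {}" using ne by (auto simp: rint_def)
  have "\<exists>x\<in>Ph. \<forall>y\<in>Ph. fpi pth y $ e \<le> fpi pth x $ e" for e
  proof -
    have "continuous_on Ph (\<lambda>\<pi>. \<pi> \<bullet> ind pth e)" by (intro continuous_intros)
    from continuous_attains_sup[OF cpt Pne this] show ?thesis by (simp add: fpi_inner)
  qed
  then obtain xm where xm: "\<And>e. xm e \<in> Ph" "\<And>e y. y \<in> Ph \<Longrightarrow> fpi pth y $ e \<le> fpi pth (xm e) $ e"
    by metis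
  define M where "M e = fpi pth (xm e) $ e" for e
  have Mcap: "ereal (M e) < cap mu e" for e
    using xm(1)[of e] subPi by (auto simp: M_def Pi_set_def)
  have M0: "0 \<le> M e" for e using xm(1)[of e] subS fpi_ge0 by (auto simp: M_def)
  have Mmax: "fpi pth y $ e \<le> M e" if "y \<in> Ph" for y e using xm(2)[OF that] by (simp add: M_def)
  define Cbar where "Cbar e = (if cap mu e > 1 then 1 else (M e + real_of_ereal (cap mu e)) / 2)" for e
  have capfin: "cap mu e = ereal (real_of_ereal (cap mu e))" "M e < real_of_ereal (cap mu e)"
    if "\<not> cap mu e > 1" for e
  proof -
    have "cap mu e \<le> 1" using that by simp
    moreover have "ereal 0 < cap mu e" using Mcap[of e] M0[of e] by (meson ereal_less_eq(3) le_less_trans)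
    ultimately show "cap mu e = ereal (real_of_ereal (cap mu e))"
      by (cases "cap mu e") auto
    then show "M e < real_of_ereal (cap mu e)" using Mcap[of e]
      by (metis ereal_less_eq(3) linorder_not_le)
  qed
  have C1: "ereal (Cbar e) < cap mu e" for e
  proof (cases "cap mu e > 1")
    case True then show ?thesis by (simp add: Cbar_def one_ereal_def)
  next
    case False
    obtain C where C: "cap mu e = ereal C" "M e < C" using capfin[OF False] by blast
    then show ?thesis using False by (simp add: Cbar_def)
  qed
  have C2: "\<exists>t0\<ge>0. \<forall>\<pi> \<rho>.
         admissible_init pth mu (\<pi> 0) (\<rho> 0) \<and> is_solution src dst pth mu Ph h G \<eta> \<pi> \<rho> \<longrightarrow>
         (\<forall>t\<ge>t0. \<forall>e. fpi pth (\<pi> t) $ e \<le> Cbar e)" if eta: "\<eta> > 0" for G \<eta>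
  proof (intro exI[of _ "ln 2 / \<eta>"] conjI allI impI)
    show "0 \<le> ln 2 / \<eta>" using eta by simp
    fix \<pi> \<rho> t e
    assume sol: "admissible_init pth mu (\<pi> 0) (\<rho> 0) \<and> is_solution src dst pth mu Ph h G \<eta> \<pi> \<rho>"
      and t: "ln 2 / \<eta> \<le> t"
    have t0: "0 \<le> t" using t eta by (smt (verit) divide_nonneg_pos ln_ge_zero)
    have piS: "\<pi> s \<in> psimplex" if "s \<ge> 0" for s
      using sol that by (auto simp: is_solution_def Pi_set_def)
    show "fpi pth (\<pi> t) $ e \<le> Cbar e"
    proof (cases "cap mu e > 1")
      case True then show ?thesis using fpi_le1[OF piS[OF t0]] by (simp add: Cbar_def one_ereal_def)
    next
      case False
      define C where "C = real_of_ereal (cap mu e)"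
      have capC: "cap mu e = ereal C" "M e < C" using capfin[OF False] by (auto simp: C_def)
      define g where "g s = \<pi> s \<bullet> ind pth e" for s
      define g' where "g' s = (\<eta> *\<^sub>R (Fh pth mu Ph h (muvec mu (\<rho> s)) - \<pi> s)) \<bullet> ind pth e" for s
      have der: "(g has_real_derivative g' s) (at s within {0..})" if "s \<ge> 0" for s
      proof -
        have "(\<pi> has_vector_derivative \<eta> *\<^sub>R (Fh pth mu Ph h (muvec mu (\<rho> s)) - \<pi> s)) (at s within {0..})"
          using sol that by (auto simp: is_solution_def)
        then have "(\<pi> has_derivative (\<lambda>x. x *\<^sub>R (\<eta> *\<^sub>R (Fh pth mu Ph h (muvec mu (\<rho> s)) - \<pi> s)))) (at s within {0..})"
          by (simp add: has_vector_derivative_def)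
        from bounded_linear.has_derivative[OF bounded_linear_inner_left this, of "ind pth e"]
        have "(g has_derivative (\<lambda>x. x * g' s)) (at s within {0..})"
          unfolding g_def g'_def by (simp add: mult.assoc)
        then show ?thesis unfolding has_field_derivative_def
          by (rule has_derivative_eq_rhs) (auto simp: fun_eq_iff)
      qed
      have le: "g' s \<le> \<eta> * (M e - g s)" if "s \<ge> 0" for s
      proof -
        have "Fh pth mu Ph h (muvec mu (\<rho> s)) \<in> Ph" by (rule Fh_in[OF adm])
        then have "Fh pth mu Ph h (muvec mu (\<rho> s)) \<bullet> ind pth e \<le> M e" using Mmax by (simp add: fpi_inner)
        then show ?thesis using eta by (simp add: g'_def g_def inner_diff_left algebra_simps)
      qed
      have db: "(g t - M e) * exp (\<eta> * t) \<le> g 0 - M e"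
        by (rule decay_bound[OF eta t0 der le])
      have "ereal (g 0) < cap mu e" using sol by (auto simp: admissible_init_def Pi_set_def g_def fpi_inner)
      then have g0: "g 0 < C" using capC by simp
      have "ln 2 \<le> \<eta> * t" using t eta by (simp add: divide_le_eq mult.commute)
      then have "exp (ln 2) \<le> exp (\<eta> * t)" by (simp only: exp_le_cancel_iff)
      then have e2: "2 \<le> exp (\<eta> * t)" by simp
      have "g t \<le> (M e + C) / 2"
      proof (cases "g t \<le> M e")
        case True then show ?thesis using capC by simp
      next
        case False
        then have "(g t - M e) * 2 \<le> (g t - M e) * exp (\<eta> * t)" using e2 by (intro mult_left_mono) auto
        then have "(g t - M e) * 2 \<le> g 0 - M e" using db by (rule order.trans)
        then have "2 * g t \<le> g 0 + M e" by simp
        then show ?thesis using g0 by simp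
      qed
      then show ?thesis using False by (simp add: Cbar_def g_def fpi_inner C_def)
    qed
  qed
  show ?thesis using C1 C2 by blast
qed

end
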